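(* Let $T\in\overline{\mathrm{Sub}}(X,1)$ and let $r$ be a positive integer with $T\subset B(1,r)$. Then \[ \mathcal{R}(T)=\bigsqcup_{\substack{T_1,T_2\in\mathcal{R}_{r+1}\\ T_1\cap T_2=T}}\mathrm{SCyl}(T_1)\times\mathrm{SCyl}(T_2),\] a disjoint union.
   Context: $N\geq2$, $F_N$ free with free basis $A$, $X$ its Cayley graph (a tree with vertex set $F_N$, unit edge lengths, path metric $d_X$), $\partial X$ its boundary, $B(1,r)=\{x\in X: d_X(1,x)\le r\}$. $\mathcal{C}_N$: closed subsets of $\partial X$ with at least two points. $\mathrm{Conv}(S)$: union of bi-infinite geodesics joining points of $S$. $\overline{\mathrm{Sub}}(X,1)$: finite subtrees of $X$ containing $1$ (including $\{1\}$). $\mathcal{R}(T)=\{(S_1,S_2)\in\mathcal{C}_N^2:\mathrm{Conv}(S_1)\cap\mathrm{Conv}(S_2)=T\}$. For an oriented edge $e$, $\mathrm{Cyl}(e)$ is the set of ends of geodesic rays starting with $e$; for a finite subtree $T'$ with $\geq2$ vertices and terminal edges $e_1,\dots,e_m$ (oriented edges ending at degree-one vertices), $\mathrm{SCyl}(T')=\{S\in\mathcal{C}_N: S\subset\bigcup_i\mathrm{Cyl}(e_i),\ S\cap\mathrm{Cyl}(e_i)\neq\emptyset\ \forall i\}$. For an integer $r\ge1$, $\mathcal{R}_r$ (round graphs of grade $r$ based at $1$) is the set of finite subtrees $T'$ of $X$ containing $1$ such that $1$ has degree $\geq 2$ in $T'$ and every degree-one vertex $u$ of $T'$ satisfies $d_X(1,u)=r$.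 *)

theory Defs
  imports Main
begin

text \<open>Free group F_N on the basis A = {0..<N}. A letter is a pair (i, b):
  generator a_i (b = True) or its inverse (b = False). Elements of F_N are
  reduced words; the Cayley graph X (right multiplication) has vertex set the
  reduced words and an edge between w and w a for every letter a; for reduced
  words this means one word is the other extended by one letter.\<close>

type_synonym letter = "nat \<times> bool"
type_synonym word = "letter list"

definition inv_letter :: "letter \<Rightarrow> letter" where
  "inv_letter a = (fst a, \<not> snd a)"

definition vertices :: "nat \<Rightarrow> word set" where
  "vertices N = {w. (\<forall>x\<in>set w. fst x < N) \<and>
                    (\<forall>i. Suc i < length w \<longrightarrow> w ! Suc i \<noteq> inv_letter (w ! i))}"

definition adj :: "nat \<Rightarrow> word \<Rightarrow> word \<Rightarrow> bool" where
  "adj N u v \<longleftrightarrow> u \<in> vertices N \<and> v \<in> vertices N \<and>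
     (\<exists>a. v = u @ [a] \<or> u = v @ [a])"

text \<open>Distance in X from the identity 1 (the empty word): word length.\<close>
definition dist1 :: "word \<Rightarrow> nat" where
  "dist1 w = length w"

text \<open>Boundary \<partial>X: infinite reduced words (ends of geodesic rays from 1).\<close>
definition bdry :: "nat \<Rightarrow> (nat \<Rightarrow> letter) set" where
  "bdry N = {\<xi>. \<forall>n. fst (\<xi> n) < N \<and> \<xi> (Suc n) \<noteq> inv_letter (\<xi> n)}"

definition conv_to :: "(nat \<Rightarrow> word) \<Rightarrow> (nat \<Rightarrow> letter) \<Rightarrow> bool" where
  "conv_to f \<xi> \<longleftrightarrow> (\<forall>k. \<exists>n0. \<forall>n\<ge>n0. k \<le> length (f n) \<and> take k (f n) = map \<xi> [0..<k])"

definition closed_bdry :: "nat \<Rightarrow> (nat \<Rightarrow> letter) set \<Rightarrow> bool" where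
  "closed_bdry N S \<longleftrightarrow> (\<forall>\<xi>\<in>bdry N. (\<forall>k. \<exists>\<eta>\<in>S. \<forall>i<k. \<eta> i = \<xi> i) \<longrightarrow> \<xi> \<in> S)"

definition CN :: "nat \<Rightarrow> (nat \<Rightarrow> letter) set set" where
  "CN N = {S. S \<subseteq> bdry N \<and> closed_bdry N S \<and> (\<exists>\<xi>\<in>S. \<exists>\<eta>\<in>S. \<xi> \<noteq> \<eta>)}"

definition geod_ray :: "nat \<Rightarrow> (nat \<Rightarrow> word) \<Rightarrow> bool" where
  "geod_ray N \<gamma> \<longleftrightarrow> (\<forall>n. adj N (\<gamma> n) (\<gamma> (Suc n)) \<and> \<gamma> (Suc (Suc n)) \<noteq> \<gamma> n)"

definition geod_line :: "nat \<Rightarrow> (int \<Rightarrow> word) \<Rightarrow> bool" where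
  "geod_line N \<gamma> \<longleftrightarrow> (\<forall>n. adj N (\<gamma> n) (\<gamma> (n + 1)) \<and> \<gamma> (n + 2) \<noteq> \<gamma> n)"

text \<open>Conv(S), represented by its vertex set (it is a union of closed edges,
  hence a subtree determined by its vertices).\<close>
definition Conv :: "nat \<Rightarrow> (nat \<Rightarrow> letter) set \<Rightarrow> word set" where
  "Conv N S = {\<gamma> m | \<gamma> m \<xi> \<eta>. geod_line N \<gamma> \<and> \<xi> \<in> S \<and> \<eta> \<in> S \<and>
       conv_to (\<lambda>n. \<gamma> (int n)) \<xi> \<and> conv_to (\<lambda>n. \<gamma> (- int n)) \<eta>}"

definition Cyl :: "nat \<Rightarrow> word \<Rightarrow> word \<Rightarrow> (nat \<Rightarrow> letter) set" where
  "Cyl N u v = {\<xi> \<in> bdry N. \<exists>\<gamma>. geod_ray N \<gamma> \<and> \<gamma> 0 = u \<and> \<gamma> 1 = v \<and> conv_to \<gamma> \<xi>}"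

definition subtree :: "nat \<Rightarrow> word set \<Rightarrow> bool" where
  "subtree N T \<longleftrightarrow> T \<noteq> {} \<and> T \<subseteq> vertices N \<and>
     (\<forall>u\<in>T. \<forall>v\<in>T. \<exists>p. p \<noteq> [] \<and> hd p = u \<and> last p = v \<and> set p \<subseteq> T \<and>
          (\<forall>i. Suc i < length p \<longrightarrow> adj N (p ! i) (p ! Suc i)))"

definition SubBar :: "nat \<Rightarrow> word set set" where
  "SubBar N = {T. finite T \<and> subtree N T \<and> [] \<in> T}"

definition deg :: "nat \<Rightarrow> word set \<Rightarrow> word \<Rightarrow> nat" where
  "deg N T v = card {u \<in> T. adj N u v}"

definition terminal_edges :: "nat \<Rightarrow> word set \<Rightarrow> (word \<times> word) set" where
  "terminal_edges N T = {(u, v). u \<in> T \<and> v \<in> T \<and> adj N u v \<and> deg N T v = 1}"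

definition SCyl :: "nat \<Rightarrow> word set \<Rightarrow> (nat \<Rightarrow> letter) set set" where
  "SCyl N T = {S \<in> CN N. S \<subseteq> (\<Union>e\<in>terminal_edges N T. Cyl N (fst e) (snd e)) \<and>
                 (\<forall>e\<in>terminal_edges N T. S \<inter> Cyl N (fst e) (snd e) \<noteq> {})}"

definition Rset :: "nat \<Rightarrow> word set \<Rightarrow> ((nat \<Rightarrow> letter) set \<times> (nat \<Rightarrow> letter) set) set" where
  "Rset N T = {(S1, S2). S1 \<in> CN N \<and> S2 \<in> CN N \<and> Conv N S1 \<inter> Conv N S2 = T}"

definition round_graphs :: "nat \<Rightarrow> nat \<Rightarrow> word set set" where
  "round_graphs N r = {T. finite T \<and> subtree N T \<and> [] \<in> T \<and> deg N T [] \<ge> 2 \<and>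
       (\<forall>u\<in>T. deg N T u = 1 \<longrightarrow> dist1 u = r)}"

end

theory Submission
  imports Defs
begin


definition pre :: "(nat \<Rightarrow> letter) \<Rightarrow> nat \<Rightarrow> word" where
  "pre \<xi> j = map \<xi> [0..<j]"

definition Pref :: "(nat \<Rightarrow> letter) set \<Rightarrow> word set" where
  "Pref S = {pre \<xi> j | \<xi> j. \<xi> \<in> S}"

lemma length_pre[simp]: "length (pre \<xi> j) = j"
  by (simp add: pre_def)

lemma take_pre[simp]: "take k (pre \<xi> j) = pre \<xi> (min k j)"
  by (cases "k \<le> j") (auto simp: pre_def take_map take_upt min_def)

lemma pre_Suc: "pre \<xi> (Suc j) = pre \<xi> j @ [\<xi> j]"
  by (simp add: pre_def)

lemma pre_0[simp]: "pre \<xi> 0 = []"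
  by (simp add: pre_def)

lemma pre_1: "pre \<xi> (Suc 0) = [\<xi> 0]"
  by (simp add: pre_def)

lemma pre_vert: "\<xi> \<in> bdry N \<Longrightarrow> pre \<xi> j \<in> vertices N"
  by (auto simp: pre_def vertices_def bdry_def)

lemma adj_cases: "adj N u v \<Longrightarrow> (\<exists>a. v = u @ [a]) \<or> (\<exists>a. u = v @ [a])"
  by (auto simp: adj_def)

lemma adj_sym: "adj N u v \<Longrightarrow> adj N v u"
  by (auto simp: adj_def)

lemma adj_len: "adj N u v \<Longrightarrow> length v = Suc (length u) \<or> length u = Suc (length v)"
  by (auto simp: adj_def)

lemma adj_pre: "\<xi> \<in> bdry N \<Longrightarrow> adj N (pre \<xi> j) (pre \<xi> (Suc j))"
  using pre_vert[of \<xi> N j] pre_vert[of \<xi> N "Suc j"] by (auto simp: adj_def pre_Suc)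

lemma conv_pre: "conv_to (\<lambda>n. pre \<xi> (c + n)) \<xi>"
  unfolding conv_to_def
  by (metis le_add2 le_trans min.absorb1 take_pre pre_def length_pre)

lemma ray_up:
  assumes r: "\<And>n. adj N (f n) (f (Suc n)) \<and> f (Suc (Suc n)) \<noteq> f n"
    and f1: "f 1 = f 0 @ [a]"
  shows "\<exists>b. f (Suc n) = f n @ [b]"
proof (induction n)
  case 0 then show ?case using f1 by simp
next
  case (Suc n)
  then obtain b where b: "f (Suc n) = f n @ [b]" by blast
  from r[of "Suc n"] have "adj N (f (Suc n)) (f (Suc (Suc n)))" by simp
  from adj_cases[OF this] show ?case
  proof
    assume "\<exists>c. f (Suc n) = f (Suc (Suc n)) @ [c]"
    then obtain c where "f (Suc n) = f (Suc (Suc n)) @ [c]" by blast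
    with b have "f (Suc (Suc n)) = f n" by simp
    with r[of n] show ?thesis by simp
  qed simp
qed

lemma ray_ext:
  assumes r: "\<And>n. adj N (f n) (f (Suc n)) \<and> f (Suc (Suc n)) \<noteq> f n"
    and f1: "f 1 = f 0 @ [a]"
  shows "\<exists>s. f (j + d) = f j @ s \<and> length s = d"
proof (induction d)
  case 0 then show ?case by simp
next
  case (Suc d)
  then obtain s where s: "f (j + d) = f j @ s" "length s = d" by blast
  obtain b where "f (Suc (j + d)) = f (j + d) @ [b]" using ray_up[OF r f1] by blast
  with s show ?case by (intro exI[of _ "s @ [b]"]) simp
qed

lemma ray_pre:
  assumes r: "\<And>n. adj N (f n) (f (Suc n)) \<and> f (Suc (Suc n)) \<noteq> f n"
    and f1: "f 1 = f 0 @ [a]" and c: "conv_to f \<xi>"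
  shows "f j = pre \<xi> (length (f 0) + j)"
proof -
  have len: "length (f j) = length (f 0) + j"
    using ray_ext[OF r f1, of 0 j] by auto
  let ?k = "length (f 0) + j"
  obtain n0 where n0: "\<And>n. n \<ge> n0 \<Longrightarrow> ?k \<le> length (f n) \<and> take ?k (f n) = map \<xi> [0..<?k]"
    using c unfolding conv_to_def by blast
  define n where "n = max n0 j"
  obtain s where s: "f (j + (n - j)) = f j @ s" using ray_ext[OF r f1, of j "n - j"] by blast
  have "j + (n - j) = n" by (simp add: n_def)
  with s have "f n = f j @ s" by simp
  then have "take ?k (f n) = f j" using len by simp
  moreover have "take ?k (f n) = map \<xi> [0..<?k]" using n0[of n] by (simp add: n_def)
  ultimately show ?thesis by (simp add: pre_def)
qed



lemma shift_pos:
  assumes "conv_to (\<lambda>n. \<gamma> (int n)) \<xi>"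
  shows "conv_to (\<lambda>j. \<gamma> (m0 + int j)) \<xi>"
  unfolding conv_to_def
proof
  fix k
  obtain n0 where n0: "\<And>n. n \<ge> n0 \<Longrightarrow> k \<le> length (\<gamma> (int n)) \<and> take k (\<gamma> (int n)) = map \<xi> [0..<k]"
    using assms unfolding conv_to_def by blast
  show "\<exists>n0. \<forall>n\<ge>n0. k \<le> length (\<gamma> (m0 + int n)) \<and> take k (\<gamma> (m0 + int n)) = map \<xi> [0..<k]"
  proof (intro exI allI impI)
    fix j assume j: "n0 + nat \<bar>m0\<bar> \<le> j"
    define n where "n = nat (m0 + int j)"
    have "m0 + int j = int n" "n \<ge> n0" using j by (auto simp: n_def)
    then show "k \<le> length (\<gamma> (m0 + int j)) \<and> take k (\<gamma> (m0 + int j)) = map \<xi> [0..<k]"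
      using n0[of n] by simp
  qed
qed

lemma shift_neg:
  assumes "conv_to (\<lambda>n. \<gamma> (- int n)) \<xi>"
  shows "conv_to (\<lambda>j. \<gamma> (m0 - int j)) \<xi>"
  unfolding conv_to_def
proof
  fix k
  obtain n0 where n0: "\<And>n. n \<ge> n0 \<Longrightarrow> k \<le> length (\<gamma> (- int n)) \<and> take k (\<gamma> (- int n)) = map \<xi> [0..<k]"
    using assms unfolding conv_to_def by blast
  show "\<exists>n0. \<forall>n\<ge>n0. k \<le> length (\<gamma> (m0 - int n)) \<and> take k (\<gamma> (m0 - int n)) = map \<xi> [0..<k]"
  proof (intro exI allI impI)
    fix j assume j: "n0 + nat \<bar>m0\<bar> \<le> j"
    define n where "n = nat (int j - m0)"
    have "m0 - int j = - int n" "n \<ge> n0" using j by (auto simp: n_def)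
    then show "k \<le> length (\<gamma> (m0 - int j)) \<and> take k (\<gamma> (m0 - int j)) = map \<xi> [0..<k]"
      using n0[of n] by simp
  qed
qed

lemma line_struct:
  assumes g: "geod_line N \<gamma>" and c1: "conv_to (\<lambda>n. \<gamma> (int n)) \<xi>"
    and c2: "conv_to (\<lambda>n. \<gamma> (- int n)) \<eta>"
  shows "\<exists>m0. (\<forall>j. \<gamma> (m0 + int j) = pre \<xi> (length (\<gamma> m0) + j)) \<and>
              (\<forall>j. \<gamma> (m0 - int j) = pre \<eta> (length (\<gamma> m0) + j)) \<and>
              \<xi> (length (\<gamma> m0)) \<noteq> \<eta> (length (\<gamma> m0))"
proof -
  define L0 where "L0 = (LEAST l. \<exists>m. length (\<gamma> m) = l)"
  have "\<exists>m. length (\<gamma> m) = L0" unfolding L0_def by (rule LeastI[of _ "length (\<gamma> 0)"]) blast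
  then obtain m0 where m0: "length (\<gamma> m0) = L0" by blast
  have mn: "L0 \<le> length (\<gamma> m)" for m unfolding L0_def by (rule Least_le) blast
  have gl: "adj N (\<gamma> n) (\<gamma> (n + 1)) \<and> \<gamma> (n + 2) \<noteq> \<gamma> n" for n
    using g unfolding geod_line_def by blast
  define f where "f j = \<gamma> (m0 + int j)" for j
  define h where "h j = \<gamma> (m0 - int j)" for j
  have rf: "adj N (f n) (f (Suc n)) \<and> f (Suc (Suc n)) \<noteq> f n" for n
    using gl[of "m0 + int n"] by (simp add: f_def algebra_simps)
  have rh: "adj N (h n) (h (Suc n)) \<and> h (Suc (Suc n)) \<noteq> h n" for n
  proof -
    have 1: "adj N (\<gamma> (m0 - int n - 1)) (\<gamma> (m0 - int n))"
      using gl[of "m0 - int n - 1"] by simp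
    have 2: "\<gamma> (m0 - int n - 2 + 2) \<noteq> \<gamma> (m0 - int n - 2)" using gl[of "m0 - int n - 2"] by blast
    show ?thesis using adj_sym[OF 1] 2 by (simp add: h_def algebra_simps)
  qed
  have f1: "\<exists>a. f 1 = f 0 @ [a]"
  proof -
    have "adj N (f 0) (f 1)" using rf[of 0] by simp
    from adj_cases[OF this] show ?thesis
    proof
      assume "\<exists>a. f 0 = f 1 @ [a]"
      then have "length (f 1) < L0" using m0 by (auto simp: f_def)
      moreover have "L0 \<le> length (f 1)" using mn by (simp add: f_def)
      ultimately show ?thesis by linarith
    qed
  qed
  then obtain a where a: "f 1 = f 0 @ [a]" by blast
  have h1: "\<exists>a. h 1 = h 0 @ [a]"
  proof -
    have "adj N (h 0) (h 1)" using rh[of 0] by simp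
    from adj_cases[OF this] show ?thesis
    proof
      assume "\<exists>a. h 0 = h 1 @ [a]"
      then have "length (h 1) < L0" using m0 by (auto simp: h_def)
      moreover have "L0 \<le> length (h 1)" using mn by (simp add: h_def)
      ultimately show ?thesis by linarith
    qed
  qed
  then obtain b where b: "h 1 = h 0 @ [b]" by blast
  have cf: "conv_to f \<xi>" unfolding f_def by (rule shift_pos[OF c1])
  have ch: "conv_to h \<eta>" unfolding h_def by (rule shift_neg[OF c2])
  have F: "f j = pre \<xi> (L0 + j)" for j using ray_pre[OF rf a cf, of j] m0 by (simp add: f_def)
  have H: "h j = pre \<eta> (L0 + j)" for j using ray_pre[OF rh b ch, of j] m0 by (simp add: h_def)
  have ne: "f 1 \<noteq> h 1"
    using gl[of "m0 - 1"] by (simp add: f_def h_def algebra_simps)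
  have "\<xi> L0 \<noteq> \<eta> L0"
  proof
    assume e: "\<xi> L0 = \<eta> L0"
    have "pre \<xi> L0 = pre \<eta> L0" using F[of 0] H[of 0] by (simp add: f_def h_def)
    then have "f 1 = h 1" using F[of 1] H[of 1] e by (simp add: pre_Suc)
    with ne show False by simp
  qed
  then show ?thesis using F H m0 by (auto simp: f_def h_def intro!: exI[of _ m0])
qed



lemma Conv_sub_Pref: "Conv N S \<subseteq> Pref S"
proof
  fix w assume "w \<in> Conv N S"
  then obtain \<gamma> m \<xi> \<eta> where w: "w = \<gamma> m" and g: "geod_line N \<gamma>" and s: "\<xi> \<in> S" "\<eta> \<in> S"
    and c1: "conv_to (\<lambda>n. \<gamma> (int n)) \<xi>" and c2: "conv_to (\<lambda>n. \<gamma> (- int n)) \<eta>"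
    unfolding Conv_def by blast
  obtain m0 where F: "\<And>j. \<gamma> (m0 + int j) = pre \<xi> (length (\<gamma> m0) + j)"
    and H: "\<And>j. \<gamma> (m0 - int j) = pre \<eta> (length (\<gamma> m0) + j)"
    using line_struct[OF g c1 c2] by blast
  show "w \<in> Pref S"
  proof (cases "m \<ge> m0")
    case True
    then have "m = m0 + int (nat (m - m0))" by simp
    then have "w = pre \<xi> (length (\<gamma> m0) + nat (m - m0))" using F w by metis
    then show ?thesis using s unfolding Pref_def by blast
  next
    case False
    then have "m = m0 - int (nat (m0 - m))" by simp
    then have "w = pre \<eta> (length (\<gamma> m0) + nat (m0 - m))" using H w by metis
    then show ?thesis using s unfolding Pref_def by blast
  qed
qed

lemma Conv_root: "[] \<in> Conv N S \<Longrightarrow> \<exists>\<xi>\<in>S. \<exists>\<eta>\<in>S. \<xi> 0 \<noteq> \<eta> 0"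
proof -
  assume "[] \<in> Conv N S"
  then obtain \<gamma> m \<xi> \<eta> where w: "[] = \<gamma> m" and g: "geod_line N \<gamma>" and s: "\<xi> \<in> S" "\<eta> \<in> S"
    and c1: "conv_to (\<lambda>n. \<gamma> (int n)) \<xi>" and c2: "conv_to (\<lambda>n. \<gamma> (- int n)) \<eta>"
    unfolding Conv_def by blast
  obtain m0 where F: "\<And>j. \<gamma> (m0 + int j) = pre \<xi> (length (\<gamma> m0) + j)"
    and H: "\<And>j. \<gamma> (m0 - int j) = pre \<eta> (length (\<gamma> m0) + j)"
    and ne: "\<xi> (length (\<gamma> m0)) \<noteq> \<eta> (length (\<gamma> m0))"
    using line_struct[OF g c1 c2] by blast
  have "length (\<gamma> m0) = 0"
  proof (cases "m \<ge> m0")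
    case True
    then have "m = m0 + int (nat (m - m0))" by simp
    then have "[] = pre \<xi> (length (\<gamma> m0) + nat (m - m0))" using F w by metis
    then show ?thesis by (metis add_is_0 length_pre list.size(3))
  next
    case False
    then have "m = m0 - int (nat (m0 - m))" by simp
    then have "[] = pre \<eta> (length (\<gamma> m0) + nat (m0 - m))" using H w by metis
    then show ?thesis by (metis add_is_0 length_pre list.size(3))
  qed
  then show ?thesis using ne s by auto
qed

lemma Pref_sub_Conv:
  assumes S: "S \<subseteq> bdry N" and x: "\<xi>0 \<in> S" "\<eta>0 \<in> S" "\<xi>0 0 \<noteq> \<eta>0 0"
  shows "Pref S \<subseteq> Conv N S"
proof
  fix w assume "w \<in> Pref S"
  then obtain \<xi> j where w: "w = pre \<xi> j" and xi: "\<xi> \<in> S" unfolding Pref_def by blast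
  obtain \<eta> where eta: "\<eta> \<in> S" "\<eta> 0 \<noteq> \<xi> 0" using x by metis
  have bx: "\<xi> \<in> bdry N" and be: "\<eta> \<in> bdry N" using S xi eta by auto
  define \<gamma> where "\<gamma> m = (if 0 \<le> m then pre \<xi> (nat m) else pre \<eta> (nat (- m)))" for m :: int
  have len: "length (\<gamma> m) = nat \<bar>m\<bar>" for m by (simp add: \<gamma>_def)
  have "geod_line N \<gamma>" unfolding geod_line_def
  proof
    fix n :: int
    have A: "adj N (\<gamma> n) (\<gamma> (n + 1))"
    proof (cases "n \<ge> 0")
      case True
      then show ?thesis using adj_pre[OF bx, of "nat n"] by (simp add: \<gamma>_def nat_add_distrib)
    next
      case False
      then have e: "nat (- n) = Suc (nat (- (n + 1)))" by simp
      show ?thesis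
      proof (cases "n = -1")
        case True
        then show ?thesis using adj_pre[OF be, of 0] adj_sym by (simp add: \<gamma>_def)
      next
        case nm: False
        with False have "\<gamma> n = pre \<eta> (Suc (nat (- (n + 1))))" "\<gamma> (n+1) = pre \<eta> (nat (- (n + 1)))"
          using e by (simp_all add: \<gamma>_def)
        then show ?thesis using adj_pre[OF be, of "nat (- (n + 1))"] adj_sym by simp
      qed
    qed
    have B: "\<gamma> (n + 2) \<noteq> \<gamma> n"
    proof (cases "n = -1")
      case True
      then show ?thesis using eta by (simp add: \<gamma>_def pre_1)
    next
      case False
      then have "nat \<bar>n + 2\<bar> \<noteq> nat \<bar>n\<bar>" by auto
      then show ?thesis using len by metis
    qed
    show "adj N (\<gamma> n) (\<gamma> (n + 1)) \<and> \<gamma> (n + 2) \<noteq> \<gamma> n" using A B by blast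
  qed
  moreover have "conv_to (\<lambda>n. \<gamma> (int n)) \<xi>" using conv_pre[of \<xi> 0] by (simp add: \<gamma>_def)
  moreover have "(\<lambda>n. \<gamma> (- int n)) = (\<lambda>n. pre \<eta> (0 + n))"
    by (auto simp: \<gamma>_def)
  then have "conv_to (\<lambda>n. \<gamma> (- int n)) \<eta>" using conv_pre[of \<eta> 0] by simp
  moreover have "w = \<gamma> (int j)" using w by (simp add: \<gamma>_def)
  ultimately show "w \<in> Conv N S" unfolding Conv_def using xi eta by blast
qed

lemma Cyl_intro: "\<xi> \<in> bdry N \<Longrightarrow> \<xi> \<in> Cyl N (pre \<xi> j) (pre \<xi> (Suc j))"
  unfolding Cyl_def
proof (intro CollectI conjI exI[of _ "\<lambda>n. pre \<xi> (j + n)"])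
  assume b: "\<xi> \<in> bdry N"
  show "geod_ray N (\<lambda>n. pre \<xi> (j + n))" unfolding geod_ray_def
  proof
    fix n
    have "pre \<xi> (j + Suc (Suc n)) \<noteq> pre \<xi> (j + n)"
    proof
      assume "pre \<xi> (j + Suc (Suc n)) = pre \<xi> (j + n)"
      then have "length (pre \<xi> (j + Suc (Suc n))) = length (pre \<xi> (j + n))" by simp
      then show False by simp
    qed
    then show "adj N (pre \<xi> (j + n)) (pre \<xi> (j + Suc n)) \<and> pre \<xi> (j + Suc (Suc n)) \<noteq> pre \<xi> (j + n)"
      using adj_pre[OF b, of "j+n"] by simp
  qed
  show "conv_to (\<lambda>n. pre \<xi> (j + n)) \<xi>" by (rule conv_pre)
qed (auto)

lemma Cyl_prefix:
  assumes "\<xi> \<in> Cyl N u (u @ [a])"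
  shows "pre \<xi> (Suc (length u)) = u @ [a]"
proof -
  obtain \<gamma> where g: "geod_ray N \<gamma>" "\<gamma> 0 = u" "\<gamma> 1 = u @ [a]" "conv_to \<gamma> \<xi>"
    using assms unfolding Cyl_def by blast
  have r: "adj N (\<gamma> n) (\<gamma> (Suc n)) \<and> \<gamma> (Suc (Suc n)) \<noteq> \<gamma> n" for n
    using g(1) unfolding geod_ray_def by blast
  have "\<gamma> 1 = \<gamma> 0 @ [a]" using g by simp
  from ray_pre[OF r this g(4), of 1] g show ?thesis by simp
qed



lemma subtree_path:
  assumes "subtree N T" "u \<in> T" "v \<in> T"
  shows "\<exists>p. p \<noteq> [] \<and> hd p = u \<and> last p = v \<and> set p \<subseteq> T \<and> successively (adj N) p"
  using assms unfolding subtree_def successively_conv_nth by blast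

lemma path_prefixes:
  "successively (adj N) p \<Longrightarrow> p \<noteq> [] \<Longrightarrow> hd p = [] \<Longrightarrow> take k (last p) \<in> set p"
proof (induction p arbitrary: k rule: rev_induct)
  case Nil then show ?case by simp
next
  case (snoc x xs)
  show ?case
  proof (cases "xs = []")
    case True
    then show ?thesis using snoc.prems by simp
  next
    case False
    have sx: "successively (adj N) xs" and ax: "adj N (last xs) x"
      using snoc.prems(1) False by (auto simp: successively_append_iff)
    have IH: "take k (last xs) \<in> set xs" for k
      using snoc.IH[OF sx False] snoc.prems(3) False by simp
    from adj_cases[OF ax] show ?thesis
    proof
      assume "\<exists>a. x = last xs @ [a]"
      then obtain a where a: "x = last xs @ [a]" by blast
      show ?thesis
      proof (cases "k \<le> length (last xs)")
        case True
        then have "take k x = take k (last xs)" using a by simp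
        then show ?thesis using IH[of k] by simp
      next
        case False
        then have "take k x = x" using a by simp
        then show ?thesis by simp
      qed
    next
      assume "\<exists>a. last xs = x @ [a]"
      then obtain a where a: "last xs = x @ [a]" by blast
      show ?thesis
      proof (cases "k \<le> length x")
        case True
        then have "take k x = take k (last xs)" using a by simp
        then show ?thesis using IH[of k] by simp
      next
        case False
        then have "take k x = x" by simp
        then show ?thesis by simp
      qed
    qed
  qed
qed

lemma subtree_pc:
  assumes "subtree N T" "[] \<in> T" "v \<in> T"
  shows "take k v \<in> T"
proof -
  obtain p where p: "p \<noteq> []" "hd p = []" "last p = v" "set p \<subseteq> T" "successively (adj N) p"
    using subtree_path[OF assms] by blast
  from path_prefixes[OF p(5) p(1) p(2), of k] p show ?thesis by auto
qed

lemma subtree_vert: "subtree N T \<Longrightarrow> T \<subseteq> vertices N"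
  unfolding subtree_def by blast

lemma pc_subtree:
  assumes V: "T \<subseteq> vertices N" and e: "[] \<in> T" and pc: "\<And>v k. v \<in> T \<Longrightarrow> take k v \<in> T"
  shows "subtree N T"
proof -
  have Q: "\<exists>q. q \<noteq> [] \<and> hd q = [] \<and> last q = u \<and> set q \<subseteq> T \<and> successively (adj N) q"
    if "u \<in> T" "length u = n" for u n
    using that
  proof (induction n arbitrary: u)
    case 0 then show ?case using e by (intro exI[of _ "[[]]"]) simp
  next
    case (Suc n)
    define u' where "u' = butlast u"
    have u'T: "u' \<in> T" using pc[OF Suc.prems(1), of "length u - 1"] by (simp add: u'_def butlast_conv_take)
    obtain q where q: "q \<noteq> []" "hd q = []" "last q = u'" "set q \<subseteq> T" "successively (adj N) q"
      using Suc.IH[OF u'T] Suc.prems by (auto simp: u'_def)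
    have un: "u \<noteq> []" using Suc.prems by auto
    have "u = u' @ [last u]" using un by (simp add: u'_def)
    then have "adj N u' u" using V u'T Suc.prems(1) unfolding adj_def by blast
    then show ?case using q Suc.prems(1)
      by (intro exI[of _ "q @ [u]"]) (auto simp: successively_append_iff)
  qed
  have adjs: "adj N x y \<Longrightarrow> adj N y x" for x y by (rule adj_sym)
  show ?thesis unfolding subtree_def
  proof (intro conjI ballI)
    show "T \<noteq> {}" using e by blast
    show "T \<subseteq> vertices N" by (rule V)
    fix u v assume u: "u \<in> T" and v: "v \<in> T"
    obtain qu where qu: "qu \<noteq> []" "hd qu = []" "last qu = u" "set qu \<subseteq> T" "successively (adj N) qu"
      using Q[OF u refl] by blast
    obtain qv where qv: "qv \<noteq> []" "hd qv = []" "last qv = v" "set qv \<subseteq> T" "successively (adj N) qv"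
      using Q[OF v refl] by blast
    obtain ys where ys: "qv = [] # ys" using qv(1,2) by (cases qv) auto
    have sr: "successively (adj N) (rev qu)" using qu(5) by (simp add: successively_mono[OF _ adjs] ) 
    have sys: "successively (adj N) ys" and h: "ys \<noteq> [] \<Longrightarrow> adj N [] (hd ys)"
      using qv(5) ys by (auto simp: successively_Cons)
    define p where "p = rev qu @ ys"
    have "successively (adj N) p" unfolding p_def using sr sys h qu(1,2)
      by (auto simp: successively_append_iff last_rev)
    moreover have "p \<noteq> []" "hd p = u" "set p \<subseteq> T" using qu qv ys by (auto simp: p_def hd_rev)
    moreover have "last p = v"
    proof (cases "ys = []")
      case True then show ?thesis using qu qv ys by (simp add: p_def last_rev)
    next
      case False then show ?thesis using qv ys by (simp add: p_def)
    qed
    ultimately show "\<exists>p. p \<noteq> [] \<and> hd p = u \<and> last p = v \<and> set p \<subseteq> T \<and>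
          (\<forall>i. Suc i < length p \<longrightarrow> adj N (p ! i) (p ! Suc i))"
      unfolding successively_conv_nth by blast
  qed
qed

lemma card2: "finite A \<Longrightarrow> x \<in> A \<Longrightarrow> y \<in> A \<Longrightarrow> x \<noteq> y \<Longrightarrow> 2 \<le> card A"
  by (metis card_2_iff card_mono empty_subsetI insert_subset)

lemma card_ge2_ex: "2 \<le> card A \<Longrightarrow> \<exists>x y. x \<in> A \<and> y \<in> A \<and> x \<noteq> y"
  by (metis One_nat_def card.infinite card_le_Suc0_iff_eq not_less_eq_eq numeral_2_eq_2 zero_le)



definition TB :: "(nat \<Rightarrow> letter) set \<Rightarrow> nat \<Rightarrow> word set" where
  "TB S R = Pref S \<inter> {w. length w \<le> R}"

lemma Pref_pc: "w \<in> Pref S \<Longrightarrow> take k w \<in> Pref S"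
proof -
  assume "w \<in> Pref S"
  then obtain \<xi> j where "\<xi> \<in> S" "w = pre \<xi> j" unfolding Pref_def by blast
  then have "take k w = pre \<xi> (min k j)" "\<xi> \<in> S" by simp_all
  then show ?thesis unfolding Pref_def by blast
qed

lemma Pref_vert: "S \<subseteq> bdry N \<Longrightarrow> Pref S \<subseteq> vertices N"
  unfolding Pref_def using pre_vert by blast

lemma TB_finite:
  assumes "S \<subseteq> bdry N" shows "finite (TB S R)"
proof -
  have F: "\<xi> \<in> S \<Longrightarrow> fst (\<xi> n) < N" for \<xi> n using assms unfolding bdry_def by blast
  have "set (pre \<xi> j) \<subseteq> {0..<N} \<times> UNIV" if "\<xi> \<in> S" for \<xi> j
  proof
    fix x assume "x \<in> set (pre \<xi> j)"
    then obtain i where "x = \<xi> i" unfolding pre_def by auto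
    then show "x \<in> {0..<N} \<times> UNIV" using F[OF that, of i] by (simp add: mem_Times_iff)
  qed
  then have "TB S R \<subseteq> {xs. set xs \<subseteq> {0..<N} \<times> UNIV \<and> length xs \<le> R}"
    unfolding TB_def Pref_def by auto
  moreover have "finite {xs. set xs \<subseteq> {0..<N} \<times> (UNIV::bool set) \<and> length xs \<le> R}"
    by (rule finite_lists_length_le) simp
  ultimately show ?thesis by (rule finite_subset)
qed

lemma L1:
  assumes S: "S \<in> CN N" and x: "\<xi>0 \<in> S" "\<eta>0 \<in> S" "\<xi>0 0 \<noteq> \<eta>0 0" and R: "R \<ge> 1"
  shows "TB S R \<in> round_graphs N R \<and> S \<in> SCyl N (TB S R)"
proof -
  define T1 where "T1 = TB S R"
  have sb: "S \<subseteq> bdry N" using S unfolding CN_def by blast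
  have fin: "finite T1" using TB_finite[OF sb] by (simp add: T1_def)
  have V: "T1 \<subseteq> vertices N" using Pref_vert[OF sb] by (auto simp: T1_def TB_def)
  have pT: "\<xi> \<in> S \<Longrightarrow> j \<le> R \<Longrightarrow> pre \<xi> j \<in> T1" for \<xi> j
    unfolding T1_def TB_def Pref_def by auto
  have e: "[] \<in> T1" using pT[OF x(1), of 0] by simp
  have pc: "v \<in> T1 \<Longrightarrow> take k v \<in> T1" for v k
    unfolding T1_def TB_def using Pref_pc by auto
  have st: "subtree N T1" by (rule pc_subtree[OF V e pc])
  have fn: "finite {u \<in> T1. adj N u v}" for v using fin by simp
  have d0: "2 \<le> deg N T1 []"
  proof -
    have a1: "pre \<xi>0 1 \<in> {u \<in> T1. adj N u []}"
      using pT[OF x(1), of 1] R adj_sym[OF adj_pre[of \<xi>0 N 0]] sb x by auto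
    have a2: "pre \<eta>0 1 \<in> {u \<in> T1. adj N u []}"
      using pT[OF x(2), of 1] R adj_sym[OF adj_pre[of \<eta>0 N 0]] sb x by auto
    have "pre \<xi>0 1 \<noteq> pre \<eta>0 1" using x(3) by (simp add: pre_1)
    then show ?thesis unfolding deg_def using card2[OF fn a1 a2] by blast
  qed
  have leaf: "length u = R" if u: "u \<in> T1" "deg N T1 u = 1" for u
  proof (rule ccontr)
    assume ne: "length u \<noteq> R"
    obtain \<xi> j where xj: "\<xi> \<in> S" "u = pre \<xi> j" "j \<le> R"
      using u(1) unfolding T1_def TB_def Pref_def by auto
    have jR: "j < R" using ne xj by simp
    have xb: "\<xi> \<in> bdry N" using sb xj by blast
    show False
    proof (cases j)
      case 0
      then show ?thesis using xj u d0 by simp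
    next
      case (Suc j')
      have a1: "pre \<xi> (Suc j) \<in> {w \<in> T1. adj N w u}"
        using pT[OF xj(1), of "Suc j"] jR adj_sym[OF adj_pre[OF xb, of j]] xj by auto
      have a2: "pre \<xi> j' \<in> {w \<in> T1. adj N w u}"
        using pT[OF xj(1), of j'] jR adj_pre[OF xb, of j'] xj Suc by auto
      have "length (pre \<xi> (Suc j)) \<noteq> length (pre \<xi> j')" using Suc by simp
      then have "pre \<xi> (Suc j) \<noteq> pre \<xi> j'" by metis
      then show ?thesis using card2[OF fn a1 a2] u(2) unfolding deg_def by simp
    qed
  qed
  have rg: "T1 \<in> round_graphs N R"
    unfolding round_graphs_def dist1_def using fin st e d0 leaf by blast
  have dv: "deg N T1 (pre \<xi> R) = 1" if xi: "\<xi> \<in> S" for \<xi>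
  proof -
    have xb: "\<xi> \<in> bdry N" using sb xi by blast
    have "{u \<in> T1. adj N u (pre \<xi> R)} = {pre \<xi> (R - 1)}"
    proof (intro equalityI subsetI)
      fix u assume u: "u \<in> {u \<in> T1. adj N u (pre \<xi> R)}"
      then have uT: "u \<in> T1" and a: "adj N u (pre \<xi> R)" by auto
      have "length u \<le> R" using uT unfolding T1_def TB_def by auto
      with adj_cases[OF a] obtain b where "pre \<xi> R = u @ [b]" by auto
      then have "u = take (R - 1) (pre \<xi> R)" by (metis butlast_conv_take butlast_snoc length_pre)
      then show "u \<in> {pre \<xi> (R - 1)}" by simp
    next
      fix u assume "u \<in> {pre \<xi> (R - 1)}"
      then show "u \<in> {u \<in> T1. adj N u (pre \<xi> R)}"
        using pT[OF xi, of "R - 1"] adj_pre[OF xb, of "R - 1"] R by auto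
    qed
    then show ?thesis unfolding deg_def by simp
  qed
  have cov: "S \<subseteq> (\<Union>e\<in>terminal_edges N T1. Cyl N (fst e) (snd e))"
  proof
    fix \<xi> assume xi: "\<xi> \<in> S"
    have xb: "\<xi> \<in> bdry N" using sb xi by blast
    have "(pre \<xi> (R - 1), pre \<xi> R) \<in> terminal_edges N T1"
      unfolding terminal_edges_def using pT[OF xi, of "R - 1"] pT[OF xi, of R] dv[OF xi]
        adj_pre[OF xb, of "R - 1"] R by auto
    moreover have "\<xi> \<in> Cyl N (pre \<xi> (R - 1)) (pre \<xi> R)"
      using Cyl_intro[OF xb, of "R - 1"] R by simp
    ultimately show "\<xi> \<in> (\<Union>e\<in>terminal_edges N T1. Cyl N (fst e) (snd e))" by force
  qed
  have hit: "S \<inter> Cyl N (fst e) (snd e) \<noteq> {}" if e: "e \<in> terminal_edges N T1" for e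
  proof -
    obtain u v where uv: "e = (u, v)" "u \<in> T1" "v \<in> T1" "adj N u v" "deg N T1 v = 1"
      using e unfolding terminal_edges_def by auto
    have lv: "length v = R" using leaf[OF uv(3,5)] .
    obtain \<xi> j where xj: "\<xi> \<in> S" "v = pre \<xi> j"
      using uv(3) unfolding T1_def TB_def Pref_def by auto
    have jR: "j = R" using xj lv by simp
    have xb: "\<xi> \<in> bdry N" using sb xj by blast
    have lu: "length u \<le> R" using uv(2) unfolding T1_def TB_def by auto
    with adj_cases[OF uv(4)] lv obtain b where "v = u @ [b]" by auto
    then have "u = butlast v" by simp
    also have "\<dots> = take (R - 1) (pre \<xi> R)" using xj jR by (simp add: butlast_conv_take)
    finally have "u = pre \<xi> (R - 1)" by simp
    then have "\<xi> \<in> Cyl N u v" using Cyl_intro[OF xb, of "R - 1"] R xj jR by simp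
    then show ?thesis using xj uv by auto
  qed
  have "S \<in> SCyl N T1" unfolding SCyl_def using S cov hit by blast
  then show ?thesis using rg by (simp add: T1_def)
qed



lemma L2:
  assumes T1: "T1 \<in> round_graphs N R" and S: "S \<in> SCyl N T1"
  shows "(\<exists>\<xi>\<in>S. \<exists>\<eta>\<in>S. \<xi> 0 \<noteq> \<eta> 0) \<and> TB S R = T1"
proof -
  have fin: "finite T1" and st: "subtree N T1" and e: "[] \<in> T1" and d0: "2 \<le> deg N T1 []"
    and leaf: "\<And>u. u \<in> T1 \<Longrightarrow> deg N T1 u = 1 \<Longrightarrow> length u = R"
    using T1 unfolding round_graphs_def dist1_def by auto
  have V: "T1 \<subseteq> vertices N" using subtree_vert[OF st] .
  have pc: "v \<in> T1 \<Longrightarrow> take k v \<in> T1" for v k using subtree_pc[OF st e] .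
  have fn: "finite {u \<in> T1. adj N u v}" for v using fin by simp
  have SC: "S \<in> CN N" "S \<subseteq> (\<Union>e\<in>terminal_edges N T1. Cyl N (fst e) (snd e))"
    "\<And>e. e \<in> terminal_edges N T1 \<Longrightarrow> S \<inter> Cyl N (fst e) (snd e) \<noteq> {}"
    using S unfolding SCyl_def by auto
  have bl: "v \<noteq> [] \<Longrightarrow> v \<in> T1 \<Longrightarrow> butlast v \<in> T1 \<and> adj N (butlast v) v" for v
  proof -
    assume v: "v \<noteq> []" "v \<in> T1"
    have b: "butlast v \<in> T1" using pc[OF v(2), of "length v - 1"] by (simp add: butlast_conv_take)
    have "v = butlast v @ [last v]" using v by simp
    then have "adj N (butlast v) v" using V b v unfolding adj_def by blast
    then show ?thesis using b by blast
  qed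
  have tmE: "v = u @ [last v] \<and> length v = R" if ue: "(u, v) \<in> terminal_edges N T1" for u v
  proof -
    have u: "u \<in> T1" "v \<in> T1" "adj N u v" "deg N T1 v = 1"
      using ue unfolding terminal_edges_def by auto
    have vn: "v \<noteq> []" using u(4) d0 by auto
    note b = bl[OF vn u(2)]
    from adj_cases[OF u(3)] have "\<exists>a. v = u @ [a]"
    proof
      assume "\<exists>a. u = v @ [a]"
      then obtain a where "u = v @ [a]" by blast
      then have "length u \<noteq> length (butlast v)" using vn by simp
      then have "u \<noteq> butlast v" by metis
      moreover have "u \<in> {w \<in> T1. adj N w v}" "butlast v \<in> {w \<in> T1. adj N w v}" using u b by auto
      ultimately have "2 \<le> deg N T1 v" unfolding deg_def using card2[OF fn] by blast
      with u(4) show ?thesis by simp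
    qed
    then show ?thesis using leaf[OF u(2) u(4)] by auto
  qed
  have cylp: "pre \<xi> R = v" if ue: "(u, v) \<in> terminal_edges N T1" and xi: "\<xi> \<in> Cyl N u v" for u v \<xi>
  proof -
    have tv: "v = u @ [last v]" "length v = R" using tmE[OF ue] by auto
    from xi tv(1) have "\<xi> \<in> Cyl N u (u @ [last v])" by simp
    from Cyl_prefix[OF this] tv show ?thesis by (metis length_append_singleton)
  qed
  have leafex: "\<exists>v. (butlast v, v) \<in> terminal_edges N T1 \<and> take (length w) v = w" if w: "w \<in> T1" for w
  proof -
    define D where "D = {v \<in> T1. take (length w) v = w}"
    have fD: "finite D" using fin by (simp add: D_def)
    have wD: "w \<in> D" using w by (simp add: D_def)
    define m where "m = Max (length ` D)"
    have "m \<in> length ` D" unfolding m_def using fD wD by (intro Max_in) auto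
    then obtain v where vD: "v \<in> D" and lv: "length v = m" by blast
    have mx: "x \<in> D \<Longrightarrow> length x \<le> length v" for x using fD lv unfolding m_def by simp
    have nochild: "v @ [a] \<notin> T1" for a
    proof
      assume "v @ [a] \<in> T1"
      moreover have "length (take (length w) v) = length w" using vD by (simp add: D_def)
      then have "length w \<le> length v" by simp
      ultimately have "v @ [a] \<in> D" using vD by (simp add: D_def)
      from mx[OF this] show False by simp
    qed
    have sub: "{u \<in> T1. adj N u v} \<subseteq> {butlast v}"
    proof
      fix u assume "u \<in> {u \<in> T1. adj N u v}"
      then have u: "u \<in> T1" "adj N u v" by auto
      from adj_cases[OF u(2)] show "u \<in> {butlast v}"
        using nochild u(1) by auto
    qed
    have vT: "v \<in> T1" using vD by (simp add: D_def)
    have vn: "v \<noteq> []"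
    proof
      assume "v = []"
      then have "{u \<in> T1. adj N u v} \<subseteq> {[]}" using sub by simp
      moreover have "[] \<notin> {u \<in> T1. adj N u v}" using \<open>v = []\<close> by (auto dest: adj_len)
      ultimately have "{u \<in> T1. adj N u v} = {}" by blast
      then have "deg N T1 v = 0" unfolding deg_def by (simp only: card.empty)
      then show False using d0 \<open>v = []\<close> by simp
    qed
    have "{u \<in> T1. adj N u v} = {butlast v}" using sub bl[OF vn vT] by auto
    then have "deg N T1 v = 1" unfolding deg_def by simp
    then have "(butlast v, v) \<in> terminal_edges N T1" using bl[OF vn vT] vT unfolding terminal_edges_def by auto
    then show ?thesis using vD by (auto simp: D_def)
  qed
  have wpre: "\<exists>\<xi>\<in>S. w = pre \<xi> (length w) \<and> length w \<le> R" if w: "w \<in> T1" for w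
  proof -
    obtain v where v: "(butlast v, v) \<in> terminal_edges N T1" "take (length w) v = w"
      using leafex[OF w] by blast
    obtain \<xi> where xi: "\<xi> \<in> S" "\<xi> \<in> Cyl N (butlast v) v" using SC(3)[OF v(1)] by auto
    have pv: "pre \<xi> R = v" using cylp[OF v(1) xi(2)] .
    have "length (take (length w) (pre \<xi> R)) = length w" using v(2) pv by simp
    then have lw: "length w \<le> R" by simp
    have "w = take (length w) (pre \<xi> R)" using v(2) pv by simp
    then have "w = pre \<xi> (length w)" using lw by (simp add: min_absorb1)
    then show ?thesis using xi lw by blast
  qed
  have "TB S R \<subseteq> T1"
  proof
    fix w assume "w \<in> TB S R"
    then obtain \<xi> j where w: "\<xi> \<in> S" "w = pre \<xi> j" "j \<le> R" unfolding TB_def Pref_def by auto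
    obtain u v where uv: "(u, v) \<in> terminal_edges N T1" "\<xi> \<in> Cyl N u v" using SC(2) w(1) by auto
    have "pre \<xi> R = v" using cylp[OF uv] .
    moreover have vT: "v \<in> T1" using uv(1) unfolding terminal_edges_def by auto
    ultimately have "take j (pre \<xi> R) \<in> T1" using pc by blast
    then show "w \<in> T1" using w by (simp add: min_absorb1)
  qed
  moreover have "T1 \<subseteq> TB S R"
  proof
    fix w assume "w \<in> T1"
    from wpre[OF this] show "w \<in> TB S R" unfolding TB_def Pref_def by auto
  qed
  moreover have "\<exists>\<xi>\<in>S. \<exists>\<eta>\<in>S. \<xi> 0 \<noteq> \<eta> 0"
  proof -
    obtain x y where xy: "x \<in> {u \<in> T1. adj N u []}" "y \<in> {u \<in> T1. adj N u []}" "x \<noteq> y"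
      using card_ge2_ex[OF d0[unfolded deg_def]] by blast
    have lx: "length x = 1" "length y = 1" using xy by (auto dest: adj_len)
    obtain \<xi> where xi: "\<xi> \<in> S" "x = pre \<xi> 1" using wpre[of x] xy lx by auto
    obtain \<eta> where eta: "\<eta> \<in> S" "y = pre \<eta> 1" using wpre[of y] xy lx by auto
    have "\<xi> 0 \<noteq> \<eta> 0" using xi eta xy(3) by (auto simp: pre_1)
    then show ?thesis using xi eta by blast
  qed
  ultimately show ?thesis by blast
qed



lemma Conv_eq:
  assumes "S \<in> CN N" "\<exists>\<xi>\<in>S. \<exists>\<eta>\<in>S. \<xi> 0 \<noteq> \<eta> 0"
  shows "Conv N S = Pref S"
proof -
  have sb: "S \<subseteq> bdry N" using assms(1) unfolding CN_def by blast
  obtain \<xi> \<eta> where "\<xi> \<in> S" "\<eta> \<in> S" "\<xi> 0 \<noteq> \<eta> 0" using assms(2) by blast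
  from Pref_sub_Conv[OF sb this] Conv_sub_Pref show ?thesis by blast
qed

theorem mainTheorem9:
  fixes N r :: nat and T :: "word set"
  assumes "N \<ge> 2" and "T \<in> SubBar N" and "r \<ge> 1" and "\<forall>v\<in>T. dist1 v \<le> r"
  shows "Rset N T =
           (\<Union>(T1, T2)\<in>{(T1, T2). T1 \<in> round_graphs N (r + 1) \<and> T2 \<in> round_graphs N (r + 1) \<and> T1 \<inter> T2 = T}.
              SCyl N T1 \<times> SCyl N T2)
       \<and> (\<forall>P\<in>{(T1, T2). T1 \<in> round_graphs N (r + 1) \<and> T2 \<in> round_graphs N (r + 1) \<and> T1 \<inter> T2 = T}.
          \<forall>Q\<in>{(T1, T2). T1 \<in> round_graphs N (r + 1) \<and> T2 \<in> round_graphs N (r + 1) \<and> T1 \<inter> T2 = T}.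
            P \<noteq> Q \<longrightarrow> (SCyl N (fst P) \<times> SCyl N (snd P)) \<inter> (SCyl N (fst Q) \<times> SCyl N (snd Q)) = {})"
proof -
  let ?I = "{(T1, T2). T1 \<in> round_graphs N (r + 1) \<and> T2 \<in> round_graphs N (r + 1) \<and> T1 \<inter> T2 = T}"
  have eT: "[] \<in> T" using assms(2) unfolding SubBar_def by blast
  have lT: "w \<in> T \<Longrightarrow> length w \<le> r" for w using assms(4) unfolding dist1_def by blast
  have R1: "r + 1 \<ge> 1" by simp
  have A: "Rset N T \<subseteq> (\<Union>(T1, T2)\<in>?I. SCyl N T1 \<times> SCyl N T2)"
  proof
    fix p assume "p \<in> Rset N T"
    then obtain S1 S2 where p: "p = (S1, S2)" "S1 \<in> CN N" "S2 \<in> CN N" "Conv N S1 \<inter> Conv N S2 = T"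
      unfolding Rset_def by auto
    have c1: "\<exists>\<xi>\<in>S1. \<exists>\<eta>\<in>S1. \<xi> 0 \<noteq> \<eta> 0" using Conv_root[of N S1] p eT by blast
    have c2: "\<exists>\<xi>\<in>S2. \<exists>\<eta>\<in>S2. \<xi> 0 \<noteq> \<eta> 0" using Conv_root[of N S2] p eT by blast
    have L1a: "TB S1 (r + 1) \<in> round_graphs N (r + 1) \<and> S1 \<in> SCyl N (TB S1 (r + 1))"
      using c1 L1[OF p(2) _ _ _ R1] by blast
    have L1b: "TB S2 (r + 1) \<in> round_graphs N (r + 1) \<and> S2 \<in> SCyl N (TB S2 (r + 1))"
      using c2 L1[OF p(3) _ _ _ R1] by blast
    have "TB S1 (r + 1) \<inter> TB S2 (r + 1) = T"
      using Conv_eq[OF p(2) c1] Conv_eq[OF p(3) c2] p(4) lT unfolding TB_def by fastforce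
    then have "(TB S1 (r + 1), TB S2 (r + 1)) \<in> ?I" using L1a L1b by blast
    moreover have "p \<in> SCyl N (TB S1 (r + 1)) \<times> SCyl N (TB S2 (r + 1))" using L1a L1b p by blast
    ultimately show "p \<in> (\<Union>(T1, T2)\<in>?I. SCyl N T1 \<times> SCyl N T2)" by blast
  qed
  have B: "(\<Union>(T1, T2)\<in>?I. SCyl N T1 \<times> SCyl N T2) \<subseteq> Rset N T"
  proof
    fix p assume "p \<in> (\<Union>(T1, T2)\<in>?I. SCyl N T1 \<times> SCyl N T2)"
    then obtain T1 T2 S1 S2 where p: "p = (S1, S2)" "T1 \<in> round_graphs N (r + 1)"
      "T2 \<in> round_graphs N (r + 1)" "T1 \<inter> T2 = T" "S1 \<in> SCyl N T1" "S2 \<in> SCyl N T2"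
      by auto
    have a1: "(\<exists>\<xi>\<in>S1. \<exists>\<eta>\<in>S1. \<xi> 0 \<noteq> \<eta> 0) \<and> TB S1 (r + 1) = T1" using L2[OF p(2) p(5)] .
    have a2: "(\<exists>\<xi>\<in>S2. \<exists>\<eta>\<in>S2. \<xi> 0 \<noteq> \<eta> 0) \<and> TB S2 (r + 1) = T2" using L2[OF p(3) p(6)] .
    have C1: "S1 \<in> CN N" "S2 \<in> CN N" using p(5,6) unfolding SCyl_def by auto
    have "Pref S1 \<inter> Pref S2 = T"
    proof
      show "T \<subseteq> Pref S1 \<inter> Pref S2" using a1 a2 p(4) unfolding TB_def by blast
      show "Pref S1 \<inter> Pref S2 \<subseteq> T"
      proof
        fix w assume w: "w \<in> Pref S1 \<inter> Pref S2"
        show "w \<in> T"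
        proof (cases "length w \<le> r + 1")
          case True
          then show ?thesis using w a1 a2 p(4) unfolding TB_def by blast
        next
          case False
          have "take (r + 1) w \<in> Pref S1 \<inter> Pref S2" using w Pref_pc by blast
          moreover have "length (take (r + 1) w) = r + 1" using False by simp
          ultimately have "take (r + 1) w \<in> T" using a1 a2 p(4) unfolding TB_def by auto
          from lT[OF this] \<open>length (take (r + 1) w) = r + 1\<close> show ?thesis by simp
        qed
      qed
    qed
    then have "Conv N S1 \<inter> Conv N S2 = T"
      using Conv_eq[OF C1(1)] Conv_eq[OF C1(2)] a1 a2 by simp
    then show "p \<in> Rset N T" unfolding Rset_def using p(1) C1 by blast
  qed
  have D: "\<forall>P\<in>?I. \<forall>Q\<in>?I. P \<noteq> Q \<longrightarrow> (SCyl N (fst P) \<times> SCyl N (snd P)) \<inter> (SCyl N (fst Q) \<times> SCyl N (snd Q)) = {}"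
  proof (intro ballI impI)
    fix P Q assume P: "P \<in> ?I" and Q: "Q \<in> ?I" and ne: "P \<noteq> Q"
    show "(SCyl N (fst P) \<times> SCyl N (snd P)) \<inter> (SCyl N (fst Q) \<times> SCyl N (snd Q)) = {}"
    proof (rule ccontr)
      assume "(SCyl N (fst P) \<times> SCyl N (snd P)) \<inter> (SCyl N (fst Q) \<times> SCyl N (snd Q)) \<noteq> {}"
      then obtain S1 S2 where s: "S1 \<in> SCyl N (fst P)" "S2 \<in> SCyl N (snd P)"
        "S1 \<in> SCyl N (fst Q)" "S2 \<in> SCyl N (snd Q)" by auto
      have rp: "fst P \<in> round_graphs N (r + 1)" "snd P \<in> round_graphs N (r + 1)" using P by auto
      have rq: "fst Q \<in> round_graphs N (r + 1)" "snd Q \<in> round_graphs N (r + 1)" using Q by auto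
      have "fst P = fst Q" using L2[OF rp(1) s(1)] L2[OF rq(1) s(3)] by simp
      moreover have "snd P = snd Q" using L2[OF rp(2) s(2)] L2[OF rq(2) s(4)] by simp
      ultimately show False using ne by (simp add: prod_eq_iff)
    qed
  qed
  show ?thesis using A B D by blast
qed


end
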